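(* Let $V\subset\mathbb{R}^d$ be a generic suspended antichain and let $p\in S_V$ be a characteristic point with $D_p=\{v_1,\dots,v_k\}$. For every choice of coordinates $i_1\in T_p(v_1),\dots,i_k\in T_p(v_k)$ with $p_{i_j}>0$ for all $j=1,\dots,k$, there is a maximum $M$ of $S_V$ such that $M_{i_j}=p_{i_j}$ for all $j=1,\dots,k$ (and $M\ge p$). Consequently, if moreover $p_i>0$ for all $i$, there are at least $\prod_{j=1}^k|T_p(v_j)|$ maxima of $S_V$ above $p$.
   Context: For $x,y\in\mathbb{R}^d$, $x\le y$ (dominance order) means $x_i\le y_i$ for all $i$; $y\rhd x$ means $y_i>x_i$ for all $i$; $y\rhd_i x$ means $y_i=x_i$ and $y_j>x_j$ for all $j\neq i$. $V\subset\mathbb{R}^d$ is a finite antichain in the dominance order. The orthogonal surface $S_V$ is the topological boundary of $\langle V\rangle=\{x: x\ge v\text{ for some }v\in V\}$. For $p\in S_V$, $D_p=\{v\in V:v\le p\}$ and $T_p(v)=\{i:p_i=v_i\}$. $V$ is suspended if it contains, for each $i$, a suspension vertex $M_ie_i$ (with $M_i>0$, $e_i$ the $i$-th unit vector), and every other $v\in V$ satisfies $0\le v_i<M_i$ for all $i$. A suspended $V$ is generic if whenever $v\neq w\in V$ and $v_i=w_i$ for some $i$, both $v$ and $w$ are suspension vertices. Flats: $U_i(v)=\{p\in S_V: p\rhd_i v\}$; $v\sim_i w$ iff $U_i(v)\cap U_i(w)\neq\emptyset$, with reflexive–transitive closure $\sim_i^c$; the $i$-flat of $v$ is $F_i(v)=\overline{\bigcup_{w\sim_i^c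 v}U_i(w)}$, and an $i$-flat is any set of this form. A characteristic point is a point of $S_V$ lying in some $i$-flat for every $i$. A maximum of $S_V$ is a point $M\in S_V$ such that there is no $q\in S_V$ with $q\ge M$, $q\neq M$. *)

theory Defs
  imports "HOL-Analysis.Analysis"
begin

definition dom_le :: "real^'d \<Rightarrow> real^'d \<Rightarrow> bool" where
  "dom_le x y \<longleftrightarrow> (\<forall>i. x$i \<le> y$i)"

definition dom_gt_at :: "'d \<Rightarrow> real^'d \<Rightarrow> real^'d \<Rightarrow> bool" where
  "dom_gt_at i y x \<longleftrightarrow> y$i = x$i \<and> (\<forall>j. j \<noteq> i \<longrightarrow> y$j > x$j)"

definition antichain :: "(real^'d) set \<Rightarrow> bool" where
  "antichain V \<longleftrightarrow> (\<forall>v\<in>V. \<forall>w\<in>V. dom_le v w \<longrightarrow> v = w)"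

definition up_set :: "(real^'d) set \<Rightarrow> (real^'d) set" where
  "up_set V = {x. \<exists>v\<in>V. dom_le v x}"

definition orth_surface :: "(real^'d) set \<Rightarrow> (real^'d) set" where
  "orth_surface V = frontier (up_set V)"

definition Dp :: "(real^'d) set \<Rightarrow> real^'d \<Rightarrow> (real^'d) set" where
  "Dp V p = {v\<in>V. dom_le v p}"

definition Tp :: "real^'d \<Rightarrow> real^'d \<Rightarrow> 'd set" where
  "Tp p v = {i. p$i = v$i}"

definition susp_vertex :: "real^'d \<Rightarrow> 'd \<Rightarrow> real^'d" where
  "susp_vertex M i = (\<chi> j. if j = i then M$i else 0)"

definition suspended_with :: "(real^'d) set \<Rightarrow> real^'d \<Rightarrow> bool" where
  "suspended_with V M \<longleftrightarrow>
     (\<forall>i. M$i > 0 \<and> susp_vertex M i \<in> V) \<and>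
     (\<forall>v\<in>V. v \<notin> range (susp_vertex M) \<longrightarrow> (\<forall>i. 0 \<le> v$i \<and> v$i < M$i))"

definition suspended :: "(real^'d) set \<Rightarrow> bool" where
  "suspended V \<longleftrightarrow> (\<exists>M. suspended_with V M)"

definition generic :: "(real^'d) set \<Rightarrow> bool" where
  "generic V \<longleftrightarrow> (\<exists>M. suspended_with V M \<and>
     (\<forall>v\<in>V. \<forall>w\<in>V. v \<noteq> w \<and> (\<exists>i. v$i = w$i) \<longrightarrow>
        v \<in> range (susp_vertex M) \<and> w \<in> range (susp_vertex M)))"

definition Ui :: "(real^'d) set \<Rightarrow> 'd \<Rightarrow> real^'d \<Rightarrow> (real^'d) set" where
  "Ui V i v = {p \<in> orth_surface V. dom_gt_at i p v}"

definition sim_i :: "(real^'d) set \<Rightarrow> 'd \<Rightarrow> real^'d \<Rightarrow> real^'d \<Rightarrow> bool" where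
  "sim_i V i v w \<longleftrightarrow> v \<in> V \<and> w \<in> V \<and> Ui V i v \<inter> Ui V i w \<noteq> {}"

definition flat :: "(real^'d) set \<Rightarrow> 'd \<Rightarrow> real^'d \<Rightarrow> (real^'d) set" where
  "flat V i v = closure (\<Union> {Ui V i w | w. (sim_i V i)\<^sup>*\<^sup>* v w})"

definition is_flat :: "(real^'d) set \<Rightarrow> 'd \<Rightarrow> (real^'d) set \<Rightarrow> bool" where
  "is_flat V i F \<longleftrightarrow> (\<exists>v\<in>V. F = flat V i v)"

definition characteristic_point :: "(real^'d) set \<Rightarrow> real^'d \<Rightarrow> bool" where
  "characteristic_point V p \<longleftrightarrow> p \<in> orth_surface V \<and> (\<forall>i. \<exists>F. is_flat V i F \<and> p \<in> F)"

definition is_maximum :: "(real^'d) set \<Rightarrow> real^'d \<Rightarrow> bool" where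
  "is_maximum V M \<longleftrightarrow> M \<in> orth_surface V \<and> \<not> (\<exists>q\<in>orth_surface V. dom_le M q \<and> q \<noteq> M)"

end

theory Submission
  imports Defs
begin

lemma up_closed: assumes "finite V" shows "closed (up_set V)"
proof -
  have "up_set V = (\<Union>v\<in>V. \<Inter>i. {x. x$i \<ge> v$i})"
    by (auto simp: up_set_def dom_le_def)
  moreover have "closed (\<Inter>i. {x::real^'d. x$i \<ge> v$i})" for v :: "real^'d"
    by (intro closed_INT ballI closed_halfspace_component_ge_cart)
  ultimately show ?thesis using assms by (auto intro!: closed_UN)
qed

lemma interior_up:
  fixes V :: "(real^'d) set"
  shows "x \<in> interior (up_set V) \<longleftrightarrow> (\<exists>v\<in>V. \<forall>i. v$i < x$i)"
proof
  assume "x \<in> interior (up_set V)"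
  then obtain e where e: "e > 0" "ball x e \<subseteq> up_set V"
    using mem_interior by blast
  define d where "d = e / (2 * real CARD('d))"
  have cp: "real CARD('d) > 0" by simp
  have d: "d > 0" using e cp by (simp add: d_def)
  define y where "y = x - (\<chi> i. d)"
  have "norm (x - y) \<le> (\<Sum>i\<in>UNIV. \<bar>(x - y)$i\<bar>)" by (rule norm_le_l1_cart)
  also have "\<dots> = real CARD('d) * d" using d by (simp add: y_def)
  also have "\<dots> < e" using e cp by (simp add: d_def)
  finally have "y \<in> ball x e" by (simp add: dist_norm)
  with e obtain v where "v \<in> V" "dom_le v y" by (auto simp: up_set_def)
  moreover have "\<forall>i. v$i < x$i"
  proof
    fix i
    have "v$i \<le> y$i" using \<open>dom_le v y\<close> by (simp add: dom_le_def)
    moreover have "y$i = x$i - d" by (simp add: y_def)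
    ultimately show "v$i < x$i" using d by linarith
  qed
  ultimately show "\<exists>v\<in>V. \<forall>i. v$i < x$i" by blast
next
  assume "\<exists>v\<in>V. \<forall>i. v$i < x$i"
  then obtain v where v: "v \<in> V" "\<forall>i. v$i < x$i" by blast
  have op: "open (\<Inter>i. {y::real^'d. y$i > v$i})"
    by (intro open_INT ballI open_halfspace_component_gt_cart) simp
  have sub: "(\<Inter>i. {y::real^'d. y$i > v$i}) \<subseteq> up_set V"
  proof
    fix y assume "y \<in> (\<Inter>i. {y::real^'d. y$i > v$i})"
    then have "dom_le v y" by (auto simp: dom_le_def less_imp_le)
    then show "y \<in> up_set V" using v by (auto simp: up_set_def)
  qed
  show "x \<in> interior (up_set V)"
    by (rule interiorI[OF op _ sub]) (use v in simp)
qed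

lemma surf_char:
  fixes V :: "(real^'d) set"
  assumes "finite V"
  shows "x \<in> orth_surface V \<longleftrightarrow> (\<exists>v\<in>V. dom_le v x) \<and> (\<forall>v\<in>V. \<exists>i. x$i \<le> v$i)"
proof -
  have "x \<in> orth_surface V \<longleftrightarrow> x \<in> up_set V \<and> x \<notin> interior (up_set V)"
    using up_closed[OF assms] by (simp add: orth_surface_def frontier_def)
  also have "\<dots> \<longleftrightarrow> (\<exists>v\<in>V. dom_le v x) \<and> (\<forall>v\<in>V. \<exists>i. x$i \<le> v$i)"
    unfolding interior_up by (simp add: up_set_def not_less[symmetric])
  finally show ?thesis .
qed


lemma raise:
  fixes V :: "(real^'d) set"
  assumes fin: "finite V" and qS: "q \<in> orth_surface V"
    and H: "\<forall>w\<in>V. dom_le w q \<longrightarrow> (\<exists>i. i \<notin> Z \<and> q$i \<le> w$i)"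
  shows "\<exists>e>0. q + e *\<^sub>R (\<chi> k. if k \<in> Z then 1 else 0) \<in> orth_surface V"
proof -
  define B where "B = (\<lambda>(w,k). w$k - q$k) ` {(w,k). w \<in> V \<and> w$k > q$k}"
  have "{(w,k). w \<in> V \<and> w$k > q$k} \<subseteq> V \<times> (UNIV :: 'd set)" by auto
  then have finB: "finite B" unfolding B_def using fin
    by (meson finite_SigmaI finite_class.finite_UNIV finite_imageI finite_subset)
  have Bpos: "\<forall>b\<in>B. b > 0" by (auto simp: B_def)
  define e where "e = Min (insert 1 B) / 2"
  have "Min (insert 1 B) > 0" using finB Bpos by (subst Min_gr_iff) auto
  then have e: "e > 0" by (simp add: e_def)
  have eB: "e < b" if "b \<in> B" for b
  proof -
    have "Min (insert 1 B) \<le> b" using finB that by simp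
    then show ?thesis using \<open>Min (insert 1 B) > 0\<close> by (simp add: e_def)
  qed
  define q' where "q' = q + e *\<^sub>R (\<chi> k. if k \<in> Z then 1 else 0)"
  have comp: "q'$k = q$k + (if k \<in> Z then e else 0)" for k by (simp add: q'_def)
  from qS obtain v where v: "v \<in> V" "dom_le v q" using surf_char[OF fin] by blast
  have "dom_le v q'" using v e by (auto simp: dom_le_def comp intro: order_trans)
  moreover have "\<exists>i. q'$i \<le> w$i" if w: "w \<in> V" for w
  proof (cases "dom_le w q")
    case True
    then obtain i where "i \<notin> Z" "q$i \<le> w$i" using H w by blast
    then show ?thesis by (intro exI[of _ i]) (simp add: comp)
  next
    case False
    then obtain k where k: "w$k > q$k" by (auto simp: dom_le_def not_le)
    then have "w$k - q$k \<in> B" using w unfolding B_def by force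
    then have "e < w$k - q$k" by (rule eB)
    then show ?thesis using k e by (intro exI[of _ k]) (simp add: comp)
  qed
  ultimately have "q' \<in> orth_surface V" using surf_char[OF fin] v by blast
  then show ?thesis using e unfolding q'_def by blast
qed

lemma max_crit:
  fixes V :: "(real^'d) set"
  assumes fin: "finite V" and qS: "q \<in> orth_surface V"
    and W: "\<forall>j. \<exists>w\<in>V. dom_le w q \<and> (\<forall>i. i \<noteq> j \<longrightarrow> w$i < q$i)"
  shows "is_maximum V q"
  unfolding is_maximum_def
proof (intro conjI qS notI)
  assume "\<exists>q'\<in>orth_surface V. dom_le q q' \<and> q' \<noteq> q"
  then obtain q' where q': "q' \<in> orth_surface V" "dom_le q q'" "q' \<noteq> q" by blast
  then obtain j where "q'$j \<noteq> q$j" by (metis vec_eq_iff)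
  then have j: "q$j < q'$j" using q'(2) by (auto simp: dom_le_def order_le_less)
  obtain w where w: "w \<in> V" "dom_le w q" "\<forall>i. i \<noteq> j \<longrightarrow> w$i < q$i" using W by blast
  have "w$i < q'$i" for i
  proof (cases "i = j")
    case True then show ?thesis using w(2) j by (auto simp: dom_le_def intro: le_less_trans)
  next
    case False then show ?thesis using w(3) q'(2) by (auto simp: dom_le_def intro: less_le_trans)
  qed
  moreover obtain i where "q'$i \<le> w$i" using q'(1) w(1) surf_char[OF fin] by blast
  ultimately show False by (meson not_le)
qed

lemma susp_comp: "(susp_vertex M a)$k = (if k = a then M$a else 0)"
  by (simp add: susp_vertex_def)

lemma nonneg:
  assumes "suspended_with V Mv" "v \<in> V" shows "0 \<le> v$i"
proof (cases "v \<in> range (susp_vertex Mv)")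
  case True
  then obtain a where "v = susp_vertex Mv a" by blast
  then show ?thesis using assms(1) unfolding suspended_with_def
    by (auto simp: susp_comp less_imp_le)
next
  case False
  then show ?thesis using assms unfolding suspended_with_def by blast
qed

lemma bounded_pos:
  fixes V :: "(real^'d) set"
  assumes fin: "finite V" and sw: "suspended_with V Mv" and qS: "q \<in> orth_surface V"
    and pos: "\<forall>k. q$k > 0"
  shows "q$i \<le> Mv$i"
proof -
  have "susp_vertex Mv i \<in> V" using sw by (simp add: suspended_with_def)
  then obtain k where "q$k \<le> (susp_vertex Mv i)$k" using qS surf_char[OF fin] by blast
  then show ?thesis using pos[rule_format, of k] by (auto simp: susp_comp split: if_splits)
qed


lemma main:
  fixes V :: "(real^'d) set" and p :: "real^'d" and \<iota> :: "real^'d \<Rightarrow> 'd"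
  assumes fin: "finite V" and gen: "generic V" and pS: "p \<in> orth_surface V"
    and iota: "\<forall>v\<in>Dp V p. \<iota> v \<in> Tp p v \<and> p$(\<iota> v) > 0"
  shows "\<exists>M. is_maximum V M \<and> dom_le p M \<and> (\<forall>v\<in>Dp V p. M$(\<iota> v) = p$(\<iota> v) \<and> Tp M v = {\<iota> v})"
proof -
  obtain Mv where sw: "suspended_with V Mv" and gw: "\<forall>v\<in>V. \<forall>w\<in>V. v \<noteq> w \<and> (\<exists>i. v$i = w$i) \<longrightarrow>
        v \<in> range (susp_vertex Mv) \<and> w \<in> range (susp_vertex Mv)"
    using gen unfolding generic_def by blast
  have iv: "p$(\<iota> v) = v$(\<iota> v)" "p$(\<iota> v) > 0" if "v \<in> Dp V p" for v
    using iota that by (auto simp: Tp_def)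
  have DpV: "v \<in> V" "dom_le v p" if "v \<in> Dp V p" for v using that by (auto simp: Dp_def)
  obtain v0 where v0: "v0 \<in> V" "dom_le v0 p" using pS surf_char[OF fin] by blast
  have p0: "0 \<le> p$i" for i using nonneg[OF sw v0(1), of i] v0(2) by (auto simp: dom_le_def intro: order_trans)
  define Z where "Z = {j. p$j = 0}"
  have "\<forall>w\<in>V. dom_le w p \<longrightarrow> (\<exists>i. i \<notin> Z \<and> p$i \<le> w$i)"
  proof (intro ballI impI)
    fix w assume "w \<in> V" "dom_le w p"
    then have "w \<in> Dp V p" by (simp add: Dp_def)
    then show "\<exists>i. i \<notin> Z \<and> p$i \<le> w$i" using iv[of w] by (intro exI[of _ "\<iota> w"]) (auto simp: Z_def)
  qed
  from raise[OF fin pS this] obtain e where e: "e > 0"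
    and p'S: "p + e *\<^sub>R (\<chi> k. if k \<in> Z then 1 else 0) \<in> orth_surface V" by blast
  define p' where "p' = p + e *\<^sub>R (\<chi> k. if k \<in> Z then 1 else 0)"
  have p'c: "p'$k = p$k + (if k \<in> Z then e else 0)" for k by (simp add: p'_def)
  have p'pos: "p'$k > 0" for k using p0[of k] e by (auto simp: p'c Z_def)
  have pp': "dom_le p p'" using e by (simp add: dom_le_def p'c)
  have p'I: "p'$(\<iota> v) = p$(\<iota> v)" if "v \<in> Dp V p" for v using iv[OF that] by (simp add: p'c Z_def)
  define K where "K = {q \<in> orth_surface V. dom_le p' q \<and> (\<forall>v\<in>Dp V p. q$(\<iota> v) = p$(\<iota> v))}"
  have p'K: "p' \<in> K" using p'S p'I by (simp add: K_def p'_def[symmetric] dom_le_def)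
  have Kpos: "q$k > 0" if "q \<in> K" for q k
    using that p'pos[of k] by (auto simp: K_def dom_le_def intro: less_le_trans)
  have "K \<subseteq> cbox 0 Mv"
  proof
    fix q assume q: "q \<in> K"
    then have "q \<in> orth_surface V" by (simp add: K_def)
    then show "q \<in> cbox 0 Mv" using bounded_pos[OF fin sw _ ] Kpos[OF q]
      by (auto simp: mem_box_cart less_imp_le)
  qed
  then have bK: "bounded K" by (meson bounded_cbox bounded_subset)
  have "K = orth_surface V \<inter> (\<Inter>i. {q. p'$i \<le> q$i}) \<inter>
           (\<Inter>v\<in>Dp V p. {q. q$(\<iota> v) \<le> p$(\<iota> v)} \<inter> {q. q$(\<iota> v) \<ge> p$(\<iota> v)})"
    by (auto simp: K_def dom_le_def intro: antisym)
  moreover have "closed \<dots>"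
    by (intro closed_Int closed_INT ballI frontier_closed closed_halfspace_component_ge_cart
        closed_halfspace_component_le_cart) (simp add: orth_surface_def)
  ultimately have cK: "closed K" by simp
  have "compact K" using bK cK by (simp add: compact_eq_bounded_closed)
  moreover have "continuous_on K (\<lambda>q. \<Sum>i\<in>UNIV. q$i)"
    by (intro continuous_intros)
  ultimately obtain q where qK: "q \<in> K" and qmax: "\<And>y. y \<in> K \<Longrightarrow> (\<Sum>i\<in>UNIV. y$i) \<le> (\<Sum>i\<in>UNIV. q$i)"
    using continuous_attains_sup[of K "\<lambda>q. \<Sum>i\<in>UNIV. q$i"] p'K by blast
  have qS: "q \<in> orth_surface V" and p'q: "dom_le p' q" and qI: "\<And>v. v \<in> Dp V p \<Longrightarrow> q$(\<iota> v) = p$(\<iota> v)"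
    using qK by (auto simp: K_def)
  have pq: "dom_le p q" using pp' p'q by (auto simp: dom_le_def intro: order_trans)
  have W: "\<exists>w\<in>V. dom_le w q \<and> (\<forall>i. i \<noteq> j \<longrightarrow> w$i < q$i)" if j: "j \<notin> \<iota> ` Dp V p" for j
  proof (rule ccontr)
    assume "\<not> ?thesis"
    then have "\<forall>w\<in>V. dom_le w q \<longrightarrow> (\<exists>i. i \<notin> {j} \<and> q$i \<le> w$i)" by (auto simp: not_less)
    from raise[OF fin qS this] obtain e2 where e2: "e2 > 0"
      and q2S: "q + e2 *\<^sub>R (\<chi> k. if k \<in> {j} then 1 else 0) \<in> orth_surface V" by blast
    define q2 where "q2 = q + e2 *\<^sub>R (\<chi> k. if k \<in> {j} then 1 else 0)"
    have q2c: "q2$k = q$k + (if k = j then e2 else 0)" for k by (simp add: q2_def)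
    have "q2 \<in> K" unfolding K_def
    proof (intro CollectI conjI ballI)
      show "q2 \<in> orth_surface V" using q2S by (simp add: q2_def)
      show "dom_le p' q2" using p'q e2 by (auto simp: dom_le_def q2c intro: order_trans)
      fix v assume "v \<in> Dp V p"
      then show "q2$(\<iota> v) = p$(\<iota> v)" using j qI[of v] by (auto simp: q2c)
    qed
    then have "(\<Sum>i\<in>UNIV. q2$i) \<le> (\<Sum>i\<in>UNIV. q$i)" by (rule qmax)
    moreover have "(\<Sum>i\<in>UNIV. q2$i) = (\<Sum>i\<in>UNIV. q$i) + e2"
      by (simp add: q2c sum.distrib)
    ultimately show False using e2 by simp
  qed
  have strict: "v$k < q$k" if v: "v \<in> Dp V p" and k: "k \<noteq> \<iota> v" for v k
  proof (rule ccontr)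
    assume "\<not> v$k < q$k"
    moreover have "v$k \<le> q$k" using DpV(2)[OF v] pq by (auto simp: dom_le_def intro: order_trans)
    ultimately have vk: "q$k = v$k" by simp
    have vq: "q$(\<iota> v) = v$(\<iota> v)" using qI[OF v] iv[OF v] by simp
    obtain u where u: "u \<in> V" "u \<noteq> v" "u$k = v$k"
    proof (cases "k \<in> \<iota> ` Dp V p")
      case True
      then obtain v' where v': "v' \<in> Dp V p" "k = \<iota> v'" by blast
      show ?thesis
      proof (rule that[of v'])
        show "v' \<in> V" using DpV[OF v'(1)] by simp
        show "v' \<noteq> v" using v' k by blast
        show "v'$k = v$k" using iv[OF v'(1)] qI[OF v'(1)] vk v'(2) by simp
      qed
    next
      case False
      from W[OF this] obtain w where w: "w \<in> V" "dom_le w q" "\<forall>i. i \<noteq> k \<longrightarrow> w$i < q$i" by blast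
      obtain i where "q$i \<le> w$i" using qS w(1) surf_char[OF fin] by blast
      then have "i = k" using w(3) by (meson not_le)
      then have "w$k = q$k" using \<open>q$i \<le> w$i\<close> w(2) by (auto simp: dom_le_def intro: antisym)
      show ?thesis
      proof (rule that[of w])
        show "w \<in> V" by fact
        show "w \<noteq> v" using w(3) k vq by force
        show "w$k = v$k" using \<open>w$k = q$k\<close> vk by simp
      qed
    qed
    then have "v \<in> range (susp_vertex Mv)" using gw DpV(1)[OF v] by metis
    then obtain a where a: "v = susp_vertex Mv a" by blast
    have "\<iota> v = a" using iv[OF v] a by (auto simp: susp_comp split: if_splits)
    then have "v$k = 0" using a k by (simp add: susp_comp)
    then show False using vk Kpos[OF qK, of k] by simp
  qed
  have "is_maximum V q"
  proof (rule max_crit[OF fin qS], rule allI)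
    fix j
    show "\<exists>w\<in>V. dom_le w q \<and> (\<forall>i. i \<noteq> j \<longrightarrow> w$i < q$i)"
    proof (cases "j \<in> \<iota> ` Dp V p")
      case True
      then obtain v where v: "v \<in> Dp V p" "j = \<iota> v" by blast
      have "dom_le v q" using DpV(2)[OF v(1)] pq by (auto simp: dom_le_def intro: order_trans)
      then show ?thesis using DpV(1)[OF v(1)] strict[OF v(1)] v(2) by blast
    next
      case False then show ?thesis by (rule W)
    qed
  qed
  moreover have "Tp q v = {\<iota> v}" if v: "v \<in> Dp V p" for v
    using strict[OF v] qI[OF v] iv[OF v] by (auto simp: Tp_def) (metis less_irrefl)
  ultimately show ?thesis using pq qI by blast
qed


theorem proposition5p1:
  fixes V :: "(real^'d) set" and p :: "real^'d"
  assumes "finite V" and "antichain V" and "generic V"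
    and "characteristic_point V p"
  shows "(\<forall>\<iota> :: real^'d \<Rightarrow> 'd.
            (\<forall>v\<in>Dp V p. \<iota> v \<in> Tp p v \<and> p$(\<iota> v) > 0) \<longrightarrow>
            (\<exists>M. is_maximum V M \<and> dom_le p M \<and> (\<forall>v\<in>Dp V p. M$(\<iota> v) = p$(\<iota> v))))
       \<and> ((\<forall>i. p$i > 0) \<longrightarrow>
            (\<exists>A. A \<subseteq> {M. is_maximum V M \<and> dom_le p M} \<and> finite A \<and>
                 card A = (\<Prod>v\<in>Dp V p. card (Tp p v))))"
proof (intro conjI allI impI)
  have pS: "p \<in> orth_surface V" using assms(4) by (simp add: characteristic_point_def)
  fix \<iota> :: "real^'d \<Rightarrow> 'd"
  assume "\<forall>v\<in>Dp V p. \<iota> v \<in> Tp p v \<and> p$(\<iota> v) > 0"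
  from main[OF assms(1,3) pS this]
  show "\<exists>M. is_maximum V M \<and> dom_le p M \<and> (\<forall>v\<in>Dp V p. M$(\<iota> v) = p$(\<iota> v))" by blast
next
  have pS: "p \<in> orth_surface V" using assms(4) by (simp add: characteristic_point_def)
  assume pos: "\<forall>i. p$i > 0"
  define D where "D = Dp V p"
  have finD: "finite D" using assms(1) by (simp add: D_def Dp_def)
  define S where "S = (\<Pi>\<^sub>E v\<in>D. Tp p v)"
  define P where "P = (\<lambda>\<sigma> M. is_maximum V M \<and> dom_le p M \<and> (\<forall>v\<in>D. M$(\<sigma> v) = p$(\<sigma> v) \<and> Tp M v = {\<sigma> v}))"
  define Mf where "Mf = (\<lambda>\<sigma>. SOME M. P \<sigma> M)"
  have PM: "P \<sigma> (Mf \<sigma>)" if "\<sigma> \<in> S" for \<sigma>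
  proof -
    have "\<forall>v\<in>Dp V p. \<sigma> v \<in> Tp p v \<and> p$(\<sigma> v) > 0" using that pos by (auto simp: S_def D_def)
    from main[OF assms(1,3) pS this] have "\<exists>M. P \<sigma> M" by (simp add: P_def D_def)
    then show ?thesis unfolding Mf_def by (rule someI_ex)
  qed
  have inj: "inj_on Mf S"
  proof (rule inj_onI)
    fix \<sigma> \<tau> assume st: "\<sigma> \<in> S" "\<tau> \<in> S" "Mf \<sigma> = Mf \<tau>"
    have "\<forall>v\<in>D. \<sigma> v = \<tau> v"
    proof
      fix v assume "v \<in> D"
      then have "Tp (Mf \<sigma>) v = {\<sigma> v}" "Tp (Mf \<tau>) v = {\<tau> v}" using PM[OF st(1)] PM[OF st(2)]
        by (auto simp: P_def)
      then show "\<sigma> v = \<tau> v" using st(3) by simp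
    qed
    then show "\<sigma> = \<tau>" using st(1,2) unfolding S_def by (metis PiE_ext)
  qed
  have finS: "finite S" unfolding S_def using finD by (intro finite_PiE) auto
  show "\<exists>A. A \<subseteq> {M. is_maximum V M \<and> dom_le p M} \<and> finite A \<and>
                 card A = (\<Prod>v\<in>Dp V p. card (Tp p v))"
  proof (intro exI conjI)
    show "Mf ` S \<subseteq> {M. is_maximum V M \<and> dom_le p M}" using PM by (auto simp: P_def)
    show "finite (Mf ` S)" using finS by simp
    show "card (Mf ` S) = (\<Prod>v\<in>Dp V p. card (Tp p v))"
      using card_image[OF inj] card_PiE[OF finD] by (simp add: S_def D_def)
  qed
qed

end
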